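(* Let $G$ be a connected graph. For any $i\in V(G)$, \[ r_i(G)\leq\frac{1}{\alpha_i(G)}. \]
   Context: $G$ is a finite simple graph with vertex set $[n]$ and Laplacian matrix $\mathcal{L}_G=D-A$. For a vertex $i$, $\alpha_i(G)=\min\{\mathbf{x}^\top\mathcal{L}_G\mathbf{x} : \mathbf{x}\in\mathbb{R}^n_+,\ \sum_j x_j^2=1,\ x_i=0\}$ (the inverse Perron value of $i$); for connected $G$ this equals the smallest eigenvalue of the principal submatrix $\mathcal{L}_G(i)$ obtained by deleting row and column $i$. The resistance distance $r_{ij}(G)$ is the effective resistance between $i$ and $j$ when every edge is a unit resistor, and the resistance eccentricity is $r_i(G)=\max_{j\in V(G)}r_{ij}(G)$. *)

theory Defs
  imports "HOL-Analysis.Analysis"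
begin

definition simple_graph :: "('n::finite \<Rightarrow> 'n \<Rightarrow> bool) \<Rightarrow> bool" where
  "simple_graph E \<longleftrightarrow> (\<forall>u v. E u v \<longrightarrow> E v u) \<and> (\<forall>u. \<not> E u u)"

definition graph_connected :: "('n::finite \<Rightarrow> 'n \<Rightarrow> bool) \<Rightarrow> bool" where
  "graph_connected E \<longleftrightarrow> (\<forall>u v. E\<^sup>*\<^sup>* u v)"

definition laplacian :: "('n::finite \<Rightarrow> 'n \<Rightarrow> bool) \<Rightarrow> real^'n^'n" where
  "laplacian E = (\<chi> u v. if u = v then real (card {w. E u w})
                         else if E u v then -1 else 0)"

definition inv_perron :: "('n::finite \<Rightarrow> 'n \<Rightarrow> bool) \<Rightarrow> 'n \<Rightarrow> real" where
  "inv_perron E i = Inf {x \<bullet> (laplacian E *v x) | x :: real^'n.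
       (\<forall>j. 0 \<le> x $ j) \<and> (\<Sum>j\<in>UNIV. (x $ j)\<^sup>2) = 1 \<and> x $ i = 0}"

text \<open>Effective resistance between i and j with unit resistors: inject unit
current at i, extract it at j; the potential v solves L v = e_i - e_j
(Kirchhoff + Ohm), and r_ij is the potential difference v_i - v_j.\<close>
definition resistance :: "('n::finite \<Rightarrow> 'n \<Rightarrow> bool) \<Rightarrow> 'n \<Rightarrow> 'n \<Rightarrow> real" where
  "resistance E i j = (THE r. \<exists>v :: real^'n.
       laplacian E *v v = axis i 1 - axis j 1 \<and> r = v $ i - v $ j)"

definition resistance_ecc :: "('n::finite \<Rightarrow> 'n \<Rightarrow> bool) \<Rightarrow> 'n \<Rightarrow> real" where
  "resistance_ecc E i = Max (range (resistance E i))"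

end

theory Submission
  imports Defs
begin

lemma Lv:
  assumes "simple_graph E"
  shows "(laplacian E *v x) $ u = (\<Sum>w\<in>UNIV. if E u w then x$u - x$w else 0)"
proof -
  have nl: "\<not> E u u" using assms by (simp add: simple_graph_def)
  have "(laplacian E *v x) $ u = (\<Sum>w\<in>UNIV. (if w = u then real (card {w. E u w}) * x$u else 0) - (if E u w then x$w else 0))"
    unfolding matrix_vector_mult_def laplacian_def using nl
    by (auto intro!: sum.cong)
  also have "\<dots> = real (card {w. E u w}) * x$u - (\<Sum>w\<in>UNIV. if E u w then x$w else 0)"
    by (simp add: sum_subtractf)
  moreover have "(\<Sum>w\<in>UNIV. if E u w then x$u - x$w else 0) = (\<Sum>w\<in>UNIV. (if E u w then x$u else 0) - (if E u w then x$w else 0))"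
    by (auto intro!: sum.cong)
  moreover have "\<dots> = real (card {w. E u w}) * x$u - (\<Sum>w\<in>UNIV. if E u w then x$w else 0)"
    by (simp add: sum_subtractf sum.If_cases)
  ultimately show ?thesis by simp
qed

lemma quad:
  assumes "simple_graph E"
  shows "x \<bullet> (laplacian E *v y) = (\<Sum>u\<in>UNIV. \<Sum>w\<in>UNIV. if E u w then x$u * (y$u - y$w) else 0)"
  unfolding inner_vec_def using Lv[OF assms]
  by (auto simp add: sum_distrib_left if_distrib intro!: sum.cong)

lemma swapE:
  assumes "simple_graph E"
  shows "(\<Sum>u\<in>UNIV. \<Sum>w\<in>UNIV. if E u w then f u w else 0) = (\<Sum>u\<in>UNIV. \<Sum>w\<in>UNIV. if E u w then (f w u::real) else 0)"
proof -
  have s: "\<And>u w. E u w = E w u" using assms unfolding simple_graph_def by blast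
  have "(\<Sum>u\<in>UNIV. \<Sum>w\<in>UNIV. if E u w then f u w else 0) = (\<Sum>w\<in>UNIV. \<Sum>u\<in>UNIV. if E u w then f u w else 0)"
    by (rule sum.swap)
  also have "\<dots> = (\<Sum>u\<in>UNIV. \<Sum>w\<in>UNIV. if E u w then (f w u::real) else 0)"
    using s by simp
  finally show ?thesis .
qed

lemma quad_sym:
  assumes "simple_graph E"
  shows "x \<bullet> (laplacian E *v x) = (1/2) * (\<Sum>u\<in>UNIV. \<Sum>w\<in>UNIV. if E u w then (x$u - x$w)^2 else 0)"
proof -
  have A: "x \<bullet> (laplacian E *v x) = (\<Sum>u\<in>UNIV. \<Sum>w\<in>UNIV. if E u w then x$w * (x$w - x$u) else 0)"
    unfolding quad[OF assms] by (rule swapE[OF assms])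
  have "(\<Sum>u\<in>UNIV. \<Sum>w\<in>UNIV. if E u w then (x$u - x$w)^2 else 0) =
     (\<Sum>u\<in>UNIV. \<Sum>w\<in>UNIV. (if E u w then x$u * (x$u - x$w) else 0) + (if E u w then x$w * (x$w - x$u) else 0))"
    by (auto intro!: sum.cong simp: power2_eq_square algebra_simps)
  also have "\<dots> = 2 * (x \<bullet> (laplacian E *v x))"
    using A quad[OF assms, of x x] by (simp add: sum.distrib)
  finally show ?thesis by simp
qed

lemma quad_nonneg: "simple_graph E \<Longrightarrow> 0 \<le> x \<bullet> (laplacian E *v x)"
  by (simp add: quad_sym sum_nonneg)

lemma quad_zero:
  assumes "simple_graph E" "graph_connected E" "x \<bullet> (laplacian E *v x) = 0"
  shows "x $ u = x $ v"
proof -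
  have "(\<Sum>u\<in>UNIV. \<Sum>w\<in>UNIV. if E u w then (x$u - x$w)^2 else 0) = 0"
    using assms quad_sym[OF assms(1), of x] by simp
  hence "\<forall>u\<in>UNIV. (\<Sum>w\<in>UNIV. if E u w then (x$u - x$w)^2 else 0) = 0"
    by (subst (asm) sum_nonneg_eq_0_iff) (auto intro: sum_nonneg)
  hence "\<forall>u\<in>UNIV. \<forall>w\<in>UNIV. (if E u w then (x$u - x$w)^2 else 0) = 0"
    by (subst (asm) sum_nonneg_eq_0_iff) auto
  hence edge: "\<And>u w. E u w \<Longrightarrow> x$u = x$w"
  proof -
    fix u w assume h: "\<forall>u\<in>UNIV. \<forall>w\<in>UNIV. (if E u w then (x$u - x$w)^2 else 0) = 0" and e: "E u w"
    hence "(x$u - x$w)^2 = 0" by (metis UNIV_I)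
    thus "x$u = x$w" by simp
  qed
  have "E\<^sup>*\<^sup>* u v" using assms(2) by (simp add: graph_connected_def)
  thus ?thesis
    by (induction rule: rtranclp_induct) (auto dest: edge)
qed

lemma sumL:
  assumes "simple_graph E"
  shows "(\<Sum>u\<in>UNIV. (laplacian E *v x) $ u) = 0"
proof -
  have "(\<Sum>u\<in>UNIV. (laplacian E *v x) $ u) = (\<Sum>u\<in>UNIV. \<Sum>w\<in>UNIV. (if E u w then x$u else 0) - (if E u w then x$w else 0))"
    unfolding Lv[OF assms] by (auto intro!: sum.cong)
  also have "\<dots> = (\<Sum>u\<in>UNIV. \<Sum>w\<in>UNIV. if E u w then x$u else 0) - (\<Sum>u\<in>UNIV. \<Sum>w\<in>UNIV. if E u w then x$w else 0)"
    by (simp add: sum_subtractf)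
  also have "(\<Sum>u\<in>UNIV. \<Sum>w\<in>UNIV. if E u w then x$w else 0) = (\<Sum>u\<in>UNIV. \<Sum>w\<in>UNIV. if E u w then x$u else 0)"
    by (rule swapE[OF assms])
  finally show ?thesis by simp
qed

lemma sq_inner: "(\<Sum>j\<in>UNIV. (x $ j)\<^sup>2) = x \<bullet> (x::real^'n)"
  by (simp add: inner_vec_def power2_eq_square)

lemma alpha_facts:
  fixes E :: "'n::finite \<Rightarrow> 'n \<Rightarrow> bool" and i :: 'n
  assumes sg: "simple_graph E" and conn: "graph_connected E" and c2: "CARD('n) \<ge> 2"
  shows "0 < inv_perron E i \<and> (\<forall>x. (\<forall>j. 0 \<le> x$j) \<and> x \<bullet> x = 1 \<and> x$i = 0 \<longrightarrow> inv_perron E i \<le> x \<bullet> (laplacian E *v x))"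
proof -
  define K where "K = {x :: real^'n. (\<forall>j. 0 \<le> x $ j) \<and> x \<bullet> x = 1 \<and> x $ i = 0}"
  define f where "f = (\<lambda>x::real^'n. x \<bullet> (laplacian E *v x))"
  have ip: "inv_perron E i = Inf (f ` K)"
    unfolding inv_perron_def K_def f_def sq_inner by (rule arg_cong[where f=Inf]) auto
  have "closed K" unfolding K_def
    by (intro closed_Collect_conj closed_Collect_all closed_Collect_le closed_Collect_eq continuous_intros)
  moreover have "bounded K"
  proof -
    have "\<forall>x\<in>K. norm x \<le> 1" unfolding K_def by (auto simp: norm_eq_sqrt_inner)
    thus ?thesis unfolding bounded_iff by blast
  qed
  ultimately have "compact K" by (simp add: compact_eq_bounded_closed)
  moreover have "continuous_on K f" unfolding f_def by (intro continuous_intros)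
  ultimately have cK: "compact (f ` K)" by (rule compact_continuous_image[rotated])
  have "\<not> (\<forall>k. k = i)"
  proof
    assume "\<forall>k. k = i"
    hence "UNIV = {i}" by auto
    hence "card (UNIV::'n set) = card {i}" by (rule arg_cong)
    hence "CARD('n) = 1" by simp
    with c2 show False by simp
  qed
  then obtain k where "k \<noteq> i" by blast
  hence "axis k 1 \<in> K" unfolding K_def by (auto simp: inner_axis_axis) (auto simp: axis_def)
  hence "f ` K \<noteq> {}" by blast
  from compact_attains_inf[OF cK this] obtain x0 where x0: "x0 \<in> K" "\<forall>y\<in>K. f x0 \<le> f y" by auto
  have a: "inv_perron E i = f x0" unfolding ip using x0 by (intro cInf_eq_minimum) auto
  have "f x0 > 0"
  proof (rule ccontr)
    assume "\<not> f x0 > 0"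
    hence "f x0 = 0" using quad_nonneg[OF sg, of x0] unfolding f_def by simp
    hence "\<And>u. x0 $ u = x0 $ i" using quad_zero[OF sg conn] unfolding f_def by blast
    hence "x0 = 0" using x0(1) unfolding K_def by (simp add: vec_eq_iff)
    thus False using x0(1) unfolding K_def by simp
  qed
  thus ?thesis using a x0 unfolding K_def f_def by auto
qed

lemma existence:
  fixes E :: "'n::finite \<Rightarrow> 'n \<Rightarrow> bool" and i :: 'n
  assumes sg: "simple_graph E" and conn: "graph_connected E" and b: "(\<Sum>u\<in>UNIV. b $ u) = 0"
  shows "\<exists>v. laplacian E *v v = b"
proof -
  define M where "M = laplacian E + ((\<chi> u w. if w = i then 1 else 0) :: real^'n^'n)"
  have Mv: "(M *v x) $ u = (laplacian E *v x) $ u + x $ i" for x u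
  proof -
    have "(M *v x) $ u = (\<Sum>j\<in>UNIV. laplacian E $ u $ j * x $ j + (if j = i then x $ j else 0))"
      unfolding M_def by (auto simp: matrix_vector_mult_def algebra_simps intro!: sum.cong)
    thus ?thesis by (simp add: sum.distrib matrix_vector_mult_def)
  qed
  have key: "x $ i = 0 \<and> laplacian E *v x = M *v x" if "(\<Sum>u\<in>UNIV. (M *v x) $ u) = 0" for x
  proof -
    have "(\<Sum>u\<in>UNIV. (M *v x) $ u) = real CARD('n) * x $ i"
      unfolding Mv by (simp add: sum.distrib sumL[OF sg])
    hence "x $ i = 0" using that by simp
    thus ?thesis by (simp add: vec_eq_iff Mv)
  qed
  have "inj ((*v) M)"
  proof (rule injI)
    fix x y assume "M *v x = M *v y"
    hence h: "M *v (x - y) = 0" by (simp add: matrix_vector_mult_diff_distrib)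
    from key[of "x - y"] h have "(x - y) $ i = 0" "laplacian E *v (x - y) = 0" by auto
    hence "\<And>u. (x - y) $ u = 0" using quad_zero[OF sg conn, of "x - y" _ i] by simp
    thus "x = y" by (simp add: vec_eq_iff)
  qed
  hence "surj ((*v) M)" by (intro linear_inj_imp_surj matrix_vector_mul_linear)
  then obtain v where "M *v v = b" by (metis surjD)
  thus ?thesis using key[of v] b by metis
qed

lemma uniqueness:
  fixes E :: "'n::finite \<Rightarrow> 'n \<Rightarrow> bool"
  assumes sg: "simple_graph E" and conn: "graph_connected E"
    and "laplacian E *v v = b" "laplacian E *v v' = b"
  shows "v $ i - v $ j = v' $ i - v' $ j"
proof -
  have "laplacian E *v (v - v') = 0" using assms by (simp add: matrix_vector_mult_diff_distrib)
  hence "(v - v') $ i = (v - v') $ j" using quad_zero[OF sg conn, of "v - v'"] by simp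
  thus ?thesis by simp
qed

lemma L0: assumes "simple_graph E" shows "laplacian E *v ((\<chi> u. c) :: real^'n::finite) = 0"
proof -
  have "(laplacian E *v ((\<chi> u. c) :: real^'n)) $ k = 0" for k
    unfolding Lv[OF assms] by (simp cong: if_cong)
  thus ?thesis by (simp add: vec_eq_iff)
qed

theorem theorem4p1:
  fixes E :: "'n::finite \<Rightarrow> 'n \<Rightarrow> bool" and i :: 'n
  assumes "simple_graph E" and "graph_connected E" and "CARD('n) \<ge> 2"
  shows "resistance_ecc E i \<le> 1 / inv_perron E i"
proof -
  note sg = assms(1) and conn = assms(2)
  define \<alpha> where "\<alpha> = inv_perron E i"
  have apos: "0 < \<alpha>" and alow: "\<And>x. (\<forall>j. 0 \<le> x$j) \<Longrightarrow> x \<bullet> x = 1 \<Longrightarrow> x$i = 0 \<Longrightarrow> \<alpha> \<le> x \<bullet> (laplacian E *v x)"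
    using alpha_facts[OF assms] unfolding \<alpha>_def by auto
  have r: "resistance E i j \<le> 1 / \<alpha>" for j
  proof -
    define b :: "real^'n" where "b = axis i 1 - axis j 1"
    have bs: "(\<Sum>u\<in>UNIV. b $ u) = 0" unfolding b_def by (simp add: axis_def sum_subtractf)
    obtain v where v: "laplacian E *v v = b" using existence[OF sg conn bs] by blast
    define w where "w = v - (\<chi> u. v $ i)"
    have Lw: "laplacian E *v w = b" unfolding w_def using v L0[OF sg] by (simp add: matrix_vector_mult_diff_distrib)
    have wi: "w $ i = 0" unfolding w_def by simp
    have res: "resistance E i j = w $ i - w $ j"
      unfolding resistance_def
    proof (rule the_equality)
      show "\<exists>v. laplacian E *v v = axis i 1 - axis j 1 \<and> w $ i - w $ j = v $ i - v $ j"
        using Lw b_def by blast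
    next
      fix r assume "\<exists>v. laplacian E *v v = axis i 1 - axis j 1 \<and> r = v $ i - v $ j"
      then obtain v' where "laplacian E *v v' = b" "r = v' $ i - v' $ j" unfolding b_def by blast
      thus "r = w $ i - w $ j" using uniqueness[OF sg conn _ Lw] by metis
    qed
    define r where "r = - w $ j"
    have rr: "resistance E i j = r" unfolding res r_def wi by simp
    have wLw: "w \<bullet> (laplacian E *v w) = r"
      unfolding Lw b_def r_def by (simp add: inner_diff_right wi inner_axis)
    define a :: "real^'n" where "a = (\<chi> u. \<bar>w $ u\<bar>)"
    have aLa: "a \<bullet> (laplacian E *v a) \<le> r"
    proof -
      have "a \<bullet> (laplacian E *v a) \<le> w \<bullet> (laplacian E *v w)"
      proof -
        have t: "(if E u w' then \<bar>w $ u\<bar> * (\<bar>w $ u\<bar> - \<bar>w $ w'\<bar>) else 0) \<le> (if E u w' then w $ u * (w $ u - w $ w') else 0)" for u w'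
          by (simp add: algebra_simps abs_mult_self_eq abs_ge_self flip: abs_mult)
        show ?thesis unfolding quad[OF sg] a_def vec_lambda_beta by (intro sum_mono t)
      qed
      thus ?thesis using wLw by simp
    qed
    have aa: "a \<bullet> a = w \<bullet> w" unfolding a_def inner_vec_def by (simp add: abs_mult_self_eq)
    show ?thesis
    proof (cases "r \<le> 0")
      case True
      thus ?thesis using rr apos by (smt (verit) divide_pos_pos)
    next
      case False
      define s where "s = w \<bullet> w"
      have "(w $ j)^2 \<le> s" unfolding s_def inner_vec_def
        using member_le_sum[of j UNIV "\<lambda>u. w $ u * w $ u"] by (simp add: power2_eq_square)
      hence rs: "r^2 \<le> s" unfolding r_def by simp
      hence spos: "0 < s" using False by (smt (verit) zero_less_power2)
      define x where "x = (1 / sqrt s) *\<^sub>R a"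
      have "\<alpha> \<le> x \<bullet> (laplacian E *v x)"
      proof (rule alow)
        show "\<forall>j. 0 \<le> x $ j" unfolding x_def a_def using spos by simp
        show "x \<bullet> x = 1" unfolding x_def using spos aa s_def by (simp add: power2_eq_square[symmetric])
        show "x $ i = 0" unfolding x_def a_def using wi by simp
      qed
      also have "x \<bullet> (laplacian E *v x) = (a \<bullet> (laplacian E *v a)) / s"
        unfolding x_def using spos by (simp add: matrix_vector_mult_scaleR power2_eq_square[symmetric])
      finally have "\<alpha> * s \<le> a \<bullet> (laplacian E *v a)" using spos by (simp add: le_divide_eq)
      hence "\<alpha> * s \<le> r" using aLa by simp
      moreover have "\<alpha> * r^2 \<le> \<alpha> * s" using rs apos by simp
      ultimately have "\<alpha> * r * r \<le> 1 * r" by (simp add: power2_eq_square algebra_simps)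
      hence "\<alpha> * r \<le> 1" using False by simp
      thus ?thesis using rr apos by (simp add: le_divide_eq mult.commute)
    qed
  qed
  show ?thesis unfolding resistance_ecc_def \<alpha>_def[symmetric]
    using r by (subst Max_le_iff) auto
qed

end
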